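(* Under Assumption 1, let $(x^k)_{k\in\mathbb{N}}$ be generated by PPGA. Then $(x^k)$ is bounded and every accumulation point of $(x^k)$ is a stationary point of $F$.
   Context: Let $f:\mathbb{R}^n\to(-\infty,+\infty]$ be proper lsc, $g,h:\mathbb{R}^n\to\mathbb{R}$, $\Omega:=\{x:g(x)\ne0\}$, $F(x):=\frac{f(x)+h(x)}{g(x)}$ on $\Omega\cap\mathrm{dom}(f)$ and $+\infty$ otherwise. Assumption 1: (i) $f$ locally Lipschitz on $\mathrm{dom}(f)\cap\Omega$; (ii) $g$ locally Lipschitz continuously differentiable and positive on $\Omega\cap\mathrm{dom}(f)$; (iii) $\nabla h$ is $L$-Lipschitz, $L>0$; (iv) $f+h\ge0$ on $\mathrm{dom}(f)$, $\Omega\cap\mathrm{dom}(f)\ne\emptyset$; (v) $\mathrm{prox}_{f-\gamma g}(x)\ne\emptyset$ for all $x$, $\gamma\ge0$; (vi) $F$ lsc and level bounded. $\mathrm{prox}_\varphi(x):=\arg\min_u\{\varphi(u)+\frac12\|u-x\|_2^2\}$. Fréchet subdifferential: $\hat\partial\varphi(x):=\{v:\liminf_{z\to x,z\ne x}\frac{\varphi(z)-\varphi(x)-\langle v,z-x\rangle}{\|z-x\|_2}\ge0\}$; a stationary point of $F$ is $x^\star$ with $0\in\hat\partial F(x^\star)$. PPGA: choose $x^0\in\Omega\cap\mathrm{dom}(f)$ and $0<\underline\alpha\le\alpha_k\le\overline\alpha<1/L$; for $k=0,1,\dots$ set $C_k:=F(x^k)$ and pick any $x^{k+1}\in\mathrm{prox}_{\alpha_k(f-C_kg)}(x^k-\alpha_k\nabla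 h(x^k))$. *)

theory Defs
  imports "HOL-Analysis.Analysis"
begin

text \<open>Extended-real valued functions \<open>'a \<Rightarrow> ereal\<close> model functions into (-inf,+inf].\<close>

definition edom :: "('a \<Rightarrow> ereal) \<Rightarrow> 'a set" where
  "edom f = {x. f x < \<infinity>}"

definition proper_fun :: "('a \<Rightarrow> ereal) \<Rightarrow> bool" where
  "proper_fun f \<longleftrightarrow> (\<forall>x. f x \<noteq> -\<infinity>) \<and> edom f \<noteq> {}"

definition lsc_fun :: "('a::topological_space \<Rightarrow> ereal) \<Rightarrow> bool" where
  "lsc_fun f \<longleftrightarrow> (\<forall>x. f x \<le> Liminf (at x) f)"

definition loc_lipschitz_on :: "'a::metric_space set \<Rightarrow> ('a \<Rightarrow> 'b::metric_space) \<Rightarrow> bool" where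
  "loc_lipschitz_on S f \<longleftrightarrow> (\<forall>x\<in>S. \<exists>e>0. \<exists>C. C-lipschitz_on (S \<inter> ball x e) f)"

definition level_bounded :: "('a::metric_space \<Rightarrow> ereal) \<Rightarrow> bool" where
  "level_bounded F \<longleftrightarrow> (\<forall>c::real. bounded {x. F x \<le> ereal c})"

definition prox :: "('a::real_normed_vector \<Rightarrow> ereal) \<Rightarrow> 'a \<Rightarrow> 'a set" where
  "prox \<phi> x = {u. \<forall>w. \<phi> u + ereal (norm (u - x)^2 / 2) \<le> \<phi> w + ereal (norm (w - x)^2 / 2)}"

definition frac_obj :: "('a \<Rightarrow> ereal) \<Rightarrow> ('a \<Rightarrow> real) \<Rightarrow> ('a \<Rightarrow> real) \<Rightarrow> 'a \<Rightarrow> ereal" where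
  "frac_obj f g h x = (if g x \<noteq> 0 \<and> x \<in> edom f
      then ereal ((real_of_ereal (f x) + h x) / g x) else \<infinity>)"

definition frechet_subdiff :: "('a::real_inner \<Rightarrow> ereal) \<Rightarrow> 'a \<Rightarrow> 'a set" where
  "frechet_subdiff \<phi> x = (if \<bar>\<phi> x\<bar> \<noteq> \<infinity> then
     {v. Liminf (at x) (\<lambda>z. (\<phi> z - \<phi> x - ereal (v \<bullet> (z - x))) / ereal (norm (z - x))) \<ge> 0}
   else {})"

end

theory Submission
  imports Defs
begin



lemma descent_aux:
  fixes h :: "'a::euclidean_space \<Rightarrow> real"
  assumes hd: "\<forall>y. (h has_derivative (\<lambda>v. G y \<bullet> v)) (at y)"
    and lip: "L-lipschitz_on UNIV G" and L0: "L \<ge> 0"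
  shows "h y - h x - G x \<bullet> (y - x) \<le> L/2 * norm (y - x)^2
      \<and> h y - h x - G x \<bullet> (y - x) \<ge> - (L/2 * norm (y - x)^2)"
proof -
  define d where "d = y - x"
  define \<phi> where "\<phi> t = h (x + t *\<^sub>R d) - t * (G x \<bullet> d)" for t
  have der: "(\<phi> has_real_derivative (G (x + t *\<^sub>R d) \<bullet> d - G x \<bullet> d)) (at t)" for t
  proof -
    have 1: "((\<lambda>t. x + t *\<^sub>R d) has_derivative (\<lambda>s. s *\<^sub>R d)) (at t)"
      by (auto intro!: derivative_eq_intros)
    have 2: "((\<lambda>t. h (x + t *\<^sub>R d)) has_derivative (\<lambda>s. G (x + t *\<^sub>R d) \<bullet> (s *\<^sub>R d))) (at t)"
      using has_derivative_compose[OF 1 hd[rule_format]] by simp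
    have 3: "((\<lambda>t. h (x + t *\<^sub>R d)) has_real_derivative (G (x + t *\<^sub>R d) \<bullet> d)) (at t)"
      unfolding has_field_derivative_def
    proof -
      have "(\<lambda>s. G (x + t *\<^sub>R d) \<bullet> (s *\<^sub>R d)) = (*) (G (x + t *\<^sub>R d) \<bullet> d)"
        by (rule ext) simp
      then show "((\<lambda>t. h (x + t *\<^sub>R d)) has_derivative (*) (G (x + t *\<^sub>R d) \<bullet> d)) (at t)"
        using 2 by simp
    qed
    show ?thesis unfolding \<phi>_def
      by (rule derivative_eq_intros 3 | simp)+
  qed
  have bnd: "\<bar>G (x + t *\<^sub>R d) \<bullet> d - G x \<bullet> d\<bar> \<le> L * t * norm d ^ 2" if "0 \<le> t" for t
  proof -
    have "\<bar>G (x + t *\<^sub>R d) \<bullet> d - G x \<bullet> d\<bar> = \<bar>(G (x + t *\<^sub>R d) - G x) \<bullet> d\<bar>"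
      by (simp add: inner_diff_left)
    also have "\<dots> \<le> norm (G (x + t *\<^sub>R d) - G x) * norm d" by (rule Cauchy_Schwarz_ineq2)
    also have "\<dots> \<le> (L * norm (t *\<^sub>R d)) * norm d"
      using lipschitz_onD[OF lip, of "x + t *\<^sub>R d" x] by (intro mult_right_mono) (auto simp: dist_norm)
    also have "\<dots> = L * t * norm d ^ 2" using that by (simp add: power2_eq_square)
    finally show ?thesis .
  qed
  have up: "(\<lambda>t. \<phi> t - L/2 * t^2 * norm d^2) 1 \<le> (\<lambda>t. \<phi> t - L/2 * t^2 * norm d^2) 0"
  proof (rule DERIV_nonpos_imp_nonincreasing[of 0 1])
    fix t :: real assume t: "0 \<le> t" "t \<le> 1"
    show "\<exists>y. ((\<lambda>t. \<phi> t - L/2 * t^2 * norm d^2) has_real_derivative y) (at t) \<and> y \<le> 0"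
      apply (rule exI[of _ "(G (x + t *\<^sub>R d) \<bullet> d - G x \<bullet> d) - L * t * norm d^2"])
      apply (intro conjI)
       apply (rule derivative_eq_intros der | simp)+
      using bnd[OF t(1)] by linarith
  qed simp
  have lo: "(\<lambda>t. \<phi> t + L/2 * t^2 * norm d^2) 0 \<le> (\<lambda>t. \<phi> t + L/2 * t^2 * norm d^2) 1"
  proof (rule DERIV_nonneg_imp_nondecreasing[of 0 1])
    fix t :: real assume t: "0 \<le> t" "t \<le> 1"
    show "\<exists>y. ((\<lambda>t. \<phi> t + L/2 * t^2 * norm d^2) has_real_derivative y) (at t) \<and> y \<ge> 0"
      apply (rule exI[of _ "(G (x + t *\<^sub>R d) \<bullet> d - G x \<bullet> d) + L * t * norm d^2"])
      apply (intro conjI)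
       apply (rule derivative_eq_intros der | simp)+
      using bnd[OF t(1)] by linarith
  qed simp
  show ?thesis using up lo by (simp add: \<phi>_def d_def)
qed



lemma prox_real:
  fixes f :: "'a::real_normed_vector \<Rightarrow> ereal"
  assumes u: "u \<in> prox (\<lambda>u. ereal a * (f u - ereal (c * g u))) z" and a: "a > 0"
    and nm: "\<forall>x. f x \<noteq> -\<infinity>" and w: "w \<in> edom f"
  shows "u \<in> edom f \<and> a * (real_of_ereal (f u) - c * g u) + norm (u - z)^2/2
           \<le> a * (real_of_ereal (f w) - c * g w) + norm (w - z)^2/2"
proof -
  have ineq: "ereal a * (f u - ereal (c * g u)) + ereal (norm (u - z)^2 / 2)
      \<le> ereal a * (f w - ereal (c * g w)) + ereal (norm (w - z)^2 / 2)"
    using u unfolding prox_def by blast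
  obtain fw where fw: "f w = ereal fw" using w nm[rule_format, of w] unfolding edom_def
    by (cases "f w") auto
  have "f u \<noteq> \<infinity>"
  proof
    assume "f u = \<infinity>"
    then show False using ineq fw a by simp
  qed
  then obtain fu where fu: "f u = ereal fu" using nm[rule_format, of u] by (cases "f u") auto
  show ?thesis using ineq fu fw by (simp add: edom_def)
qed

lemma norm_shift_sq:
  fixes u x v :: "'a::real_inner"
  shows "norm (u - (x - a *\<^sub>R v))^2 = norm (u - x)^2 + 2 * a * ((u - x) \<bullet> v) + a^2 * norm v^2"
proof -
  define p where "p = u - x"
  define q where "q = a *\<^sub>R v"
  have e: "u - (x - a *\<^sub>R v) = p + q" by (simp add: p_def q_def algebra_simps)
  have "norm (p + q)^2 = (p + q) \<bullet> (p + q)" by (rule power2_norm_eq_inner)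
  also have "\<dots> = p \<bullet> p + 2 * (p \<bullet> q) + q \<bullet> q"
    by (simp add: inner_add_left inner_add_right inner_commute)
  also have "p \<bullet> p = norm p ^ 2" by (simp add: power2_norm_eq_inner)
  also have "q \<bullet> q = a^2 * norm v^2" by (simp add: q_def power2_norm_eq_inner[symmetric] power2_eq_square)
  also have "p \<bullet> q = a * (p \<bullet> v)" by (simp add: q_def)
  finally show ?thesis unfolding e p_def by simp
qed

lemma prox_ineq:
  fixes f :: "'a::real_inner \<Rightarrow> ereal"
  assumes u: "u \<in> prox (\<lambda>u. ereal a * (f u - ereal (c * g u))) (x - a *\<^sub>R v)" and a: "a > 0"
    and nm: "\<forall>x. f x \<noteq> -\<infinity>" and w: "w \<in> edom f"
  shows "u \<in> edom f \<and> real_of_ereal (f u) - c * g u + norm (u - x)^2/(2*a) + (u - x) \<bullet> v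
           \<le> real_of_ereal (f w) - c * g w + norm (w - x)^2/(2*a) + (w - x) \<bullet> v"
proof -
  note P = prox_real[OF u a nm w]
  let ?A = "real_of_ereal (f u) - c * g u + norm (u - x)^2/(2*a) + (u - x) \<bullet> v"
  let ?B = "real_of_ereal (f w) - c * g w + norm (w - x)^2/(2*a) + (w - x) \<bullet> v"
  have "a * ?A + a^2 * norm v^2 / 2 = a * (real_of_ereal (f u) - c * g u) + norm (u - (x - a *\<^sub>R v))^2/2"
    using a unfolding norm_shift_sq by (simp add: field_simps power2_eq_square)
  moreover have "a * ?B + a^2 * norm v^2 / 2 = a * (real_of_ereal (f w) - c * g w) + norm (w - (x - a *\<^sub>R v))^2/2"
    using a unfolding norm_shift_sq by (simp add: field_simps power2_eq_square)
  ultimately have "a * ?A \<le> a * ?B" using P by linarith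
  then show ?thesis using P a by simp
qed



lemma lsc_seq:
  fixes \<phi> :: "'a::metric_space \<Rightarrow> ereal"
  assumes l: "lsc_fun \<phi>" and X: "X \<longlonglongrightarrow> a" and y: "y < \<phi> a"
  shows "eventually (\<lambda>n. y < \<phi> (X n)) sequentially"
proof -
  have "\<phi> a \<le> Liminf (at a) \<phi>" using l unfolding lsc_fun_def by blast
  then have "eventually (\<lambda>z. y < \<phi> z) (at a)" using y le_Liminf_iff by blast
  then obtain d where d: "d > 0" "\<And>z. z \<noteq> a \<Longrightarrow> dist z a < d \<Longrightarrow> y < \<phi> z"
    unfolding eventually_at by blast
  have "eventually (\<lambda>n. dist (X n) a < d) sequentially" using X d(1) by (rule tendstoD)
  then show ?thesis
    by eventually_elim (metis d(2) y)
qed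




theorem mainTheorem10:
  fixes f :: "'a::euclidean_space \<Rightarrow> ereal"
    and g h :: "'a \<Rightarrow> real"
    and gradh :: "'a \<Rightarrow> 'a"
    and L \<alpha>lo \<alpha>hi :: real
    and \<alpha> :: "nat \<Rightarrow> real"
    and x :: "nat \<Rightarrow> 'a"
  assumes f_proper: "proper_fun f"
    and f_lsc: "lsc_fun f"
    and A1: "loc_lipschitz_on (edom f \<inter> {y. g y \<noteq> 0}) (\<lambda>y. real_of_ereal (f y))"
    and A2: "\<exists>gradg :: 'a \<Rightarrow> 'a.
               (\<forall>y \<in> {y. g y \<noteq> 0} \<inter> edom f. (g has_derivative (\<lambda>v. gradg y \<bullet> v)) (at y))
             \<and> loc_lipschitz_on ({y. g y \<noteq> 0} \<inter> edom f) gradg"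
    and A2pos: "\<forall>y \<in> {y. g y \<noteq> 0} \<inter> edom f. g y > 0"
    and A3h: "\<forall>y. (h has_derivative (\<lambda>v. gradh y \<bullet> v)) (at y)"
    and A3: "L-lipschitz_on UNIV gradh" and L_pos: "L > 0"
    and A4: "\<forall>y \<in> edom f. f y + ereal (h y) \<ge> 0"
    and A4': "{y. g y \<noteq> 0} \<inter> edom f \<noteq> {}"
    and A5: "\<forall>y. \<forall>\<gamma>::real. \<gamma> \<ge> 0 \<longrightarrow> prox (\<lambda>u. f u - ereal (\<gamma> * g u)) y \<noteq> {}"
    and A6: "lsc_fun (frac_obj f g h)" and A6': "level_bounded (frac_obj f g h)"
    and x0: "x 0 \<in> {y. g y \<noteq> 0} \<inter> edom f"
    and step: "0 < \<alpha>lo" "\<forall>k. \<alpha>lo \<le> \<alpha> k \<and> \<alpha> k \<le> \<alpha>hi" "\<alpha>hi < 1 / L"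
    and iter: "\<forall>k. x (Suc k) \<in> prox
                 (\<lambda>u. ereal (\<alpha> k) * (f u - ereal (real_of_ereal (frac_obj f g h (x k)) * g u)))
                 (x k - \<alpha> k *\<^sub>R gradh (x k))"
  shows "bounded (range x) \<and>
         (\<forall>xs. (\<exists>r. strict_mono r \<and> (x \<circ> r) \<longlonglongrightarrow> xs) \<longrightarrow> 0 \<in> frechet_subdiff (frac_obj f g h) xs)"
proof -
  define F where "F = frac_obj f g h"
  define Om where "Om = {y. g y \<noteq> 0} \<inter> edom f"
  define fr where "fr y = real_of_ereal (f y)" for y
  define C where "C k = real_of_ereal (F (x k))" for k
  have nm: "\<forall>y. f y \<noteq> -\<infinity>" using f_proper unfolding proper_fun_def by blast
  have Om_pos: "g y > 0" if "y \<in> Om" for y using A2pos that unfolding Om_def by blast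
  have Om_f: "f y = ereal (fr y)" if "y \<in> edom f" for y
    using that nm[rule_format, of y] unfolding edom_def fr_def by (cases "f y") auto
  have Om_F: "F y = ereal ((fr y + h y) / g y)" if "y \<in> Om" for y
    using that unfolding F_def frac_obj_def Om_def fr_def by auto
  have nonneg: "fr y + h y \<ge> 0" if "y \<in> edom f" for y
    using A4[rule_format, OF that] Om_f[OF that] by simp
  have desc: "h y - h z - gradh z \<bullet> (y - z) \<le> L/2 * norm (y - z)^2
      \<and> h y - h z - gradh z \<bullet> (y - z) \<ge> - (L/2 * norm (y - z)^2)" for y z
    using descent_aux[OF A3h A3] L_pos by simp
  have ahi: "\<alpha>hi > 0" using step by (meson less_le_trans)
  have apos: "\<alpha> k > 0" for k using step by (meson less_le_trans)
  define c where "c = (1/\<alpha>hi - L)/2"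
  have cpos: "c > 0" using step(3) ahi L_pos unfolding c_def by (simp add: field_simps)
  have iter': "x (Suc k) \<in> prox (\<lambda>u. ereal (\<alpha> k) * (f u - ereal (C k * g u))) (x k - \<alpha> k *\<^sub>R gradh (x k))" for k
    using iter unfolding C_def F_def by blast
  have step1: "x (Suc k) \<in> Om \<and> c * norm (x (Suc k) - x k)^2 \<le> (C k - C (Suc k)) * g (x (Suc k))"
    if xk: "x k \<in> Om" for k
  proof -
    define u where "u = x (Suc k)"
    define d where "d = u - x k"
    define a where "a = \<alpha> k"
    have xkd: "x k \<in> edom f" using xk unfolding Om_def by blast
    note P = prox_ineq[OF iter'[of k] apos nm xkd]
    have ud: "u \<in> edom f" using P u_def by blast
    have P2: "fr u - C k * g u + norm d^2/(2*a) + d \<bullet> gradh (x k) \<le> fr (x k) - C k * g (x k)"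
      using P unfolding u_def d_def a_def fr_def by simp
    have Cg: "C k * g (x k) = fr (x k) + h (x k)"
      using Om_F[OF xk] Om_pos[OF xk] unfolding C_def by simp
    have D: "h u - h (x k) - gradh (x k) \<bullet> d \<le> L/2 * norm d^2" using desc[of u "x k"] d_def by simp
    have "1/(2*\<alpha>hi) \<le> 1/(2*a)" using apos step(2) a_def ahi by (simp add: frac_le)
    then have "norm d^2/(2*\<alpha>hi) \<le> norm d^2/(2*a)"
      using mult_right_mono[of "1/(2*\<alpha>hi)" "1/(2*a)" "norm d^2"] by simp
    then have key: "fr u + h u - C k * g u \<le> - c * norm d^2"
      using P2 Cg D unfolding c_def by (simp add: inner_commute field_simps)
    have gu: "g u \<noteq> 0"
    proof
      assume "g u = 0"
      then have "c * norm d^2 \<le> 0" using key nonneg[OF ud] by simp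
      then have "norm d = 0" using cpos by (simp add: mult_le_0_iff)
      then have "u = x k" unfolding d_def by simp
      then show False using \<open>g u = 0\<close> xk unfolding Om_def by simp
    qed
    have uOm: "u \<in> Om" using gu ud unfolding Om_def by blast
    have CS: "C (Suc k) = (fr u + h u) / g u" using Om_F[OF uOm] unfolding C_def u_def by simp
    have "(C k - C (Suc k)) * g u = C k * g u - (fr u + h u)"
      using CS Om_pos[OF uOm] by (simp add: field_simps)
    then show ?thesis using key uOm unfolding u_def d_def by simp
  qed
  have allOm: "x k \<in> Om" for k
  proof (induction k)
    case 0 then show ?case using x0 Om_def by simp
  next
    case (Suc k) then show ?case using step1 by blast
  qed
  have stp: "c * norm (x (Suc k) - x k)^2 \<le> (C k - C (Suc k)) * g (x (Suc k))" for k
    using step1[OF allOm] by blast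
  have Cnn: "C k \<ge> 0" for k
    using Om_F[OF allOm[of k]] Om_pos[OF allOm[of k]] nonneg[of "x k"] allOm[of k]
    unfolding C_def Om_def by simp
  have Cdec: "C (Suc k) \<le> C k" for k
  proof -
    have "0 \<le> (C k - C (Suc k)) * g (x (Suc k))" using stp[of k] cpos
      by (meson order_trans mult_nonneg_nonneg zero_le_power2 less_imp_le)
    then show ?thesis using Om_pos[OF allOm[of "Suc k"]] by (simp add: zero_le_mult_iff)
  qed
  have decC: "decseq C" using Cdec by (simp add: decseq_Suc_iff)
  obtain Cs where Cs: "C \<longlonglongrightarrow> Cs" "\<forall>i. Cs \<le> C i" using decseq_convergent[OF decC, of 0] Cnn by blast
  have FC: "F (x k) = ereal (C k)" for k using Om_F[OF allOm[of k]] unfolding C_def by simp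
  have bnd: "bounded (range x)"
  proof -
    have "range x \<subseteq> {y. F y \<le> ereal (C 0)}"
      using FC decC by (auto simp: decseq_def)
    moreover have "bounded {y. F y \<le> ereal (C 0)}" using A6' unfolding level_bounded_def F_def by blast
    ultimately show ?thesis by (rule bounded_subset[rotated])
  qed
  have accum: "0 \<in> frechet_subdiff F xs" if "strict_mono r" "(x \<circ> r) \<longlonglongrightarrow> xs" for r xs
  proof -
    note r = that
    define p where "p j = r (Suc j) - 1" for j
    have rge: "Suc j \<le> r (Suc j)" for j using seq_suble[OF r(1)] by blast
    have Sp: "Suc (p j) = r (Suc j)" for j using rge[of j] unfolding p_def by simp
    have pmono: "strict_mono p"
      unfolding strict_mono_Suc_iff
    proof
      fix j
      have "r (Suc j) < r (Suc (Suc j))" using r(1) by (simp add: strict_mono_Suc_iff)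
      then show "p j < p (Suc j)" using rge[of j] unfolding p_def by linarith
    qed
    have X1: "(\<lambda>j. x (Suc (p j))) \<longlonglongrightarrow> xs"
      unfolding Sp using LIMSEQ_Suc[OF r(2)] by (simp add: comp_def)
    have C1: "(\<lambda>j. C (Suc (p j))) \<longlonglongrightarrow> Cs"
      unfolding Sp using LIMSEQ_Suc[OF LIMSEQ_subseq_LIMSEQ[OF Cs(1) r(1)]] by (simp add: comp_def)
    have C0: "(\<lambda>j. C (p j)) \<longlonglongrightarrow> Cs"
      using LIMSEQ_subseq_LIMSEQ[OF Cs(1) pmono] by (simp add: comp_def)
    have Fxs: "F xs \<le> ereal Cs"
    proof (rule ccontr)
      assume "\<not> F xs \<le> ereal Cs"
      then obtain t where t: "ereal Cs < ereal t" "ereal t < F xs"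
        using ereal_dense2 by (metis not_le)
      have e1: "eventually (\<lambda>j. ereal t < F (x (Suc (p j)))) sequentially"
        using lsc_seq[OF A6[folded F_def] X1 t(2)] .
      have e2: "eventually (\<lambda>j. C (Suc (p j)) < t) sequentially"
        using order_tendstoD(2)[OF C1] t(1) by simp
      have "eventually (\<lambda>j. False) sequentially"
        using e1 e2 by eventually_elim (simp add: FC)
      then show False by simp
    qed
    have xsOm: "xs \<in> Om"
    proof -
      have "F xs \<noteq> \<infinity>" using Fxs by auto
      then show ?thesis unfolding F_def frac_obj_def Om_def by (auto split: if_splits)
    qed
    have gxs: "g xs > 0" using Om_pos[OF xsOm] .
    obtain gradg where gg: "\<forall>y \<in> {y. g y \<noteq> 0} \<inter> edom f. (g has_derivative (\<lambda>v. gradg y \<bullet> v)) (at y)"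
      using A2 by blast
    have gcont: "isCont g xs" using gg xsOm unfolding Om_def by (meson has_derivative_continuous)
    have hcont: "isCont h y" for y using A3h has_derivative_continuous by blast
    have Gcont: "isCont gradh y" for y
      using lipschitz_on_continuous_on[OF A3] by (simp add: continuous_on_eq_continuous_at)
    have gX1: "(\<lambda>j. g (x (Suc (p j)))) \<longlonglongrightarrow> g xs" using isCont_tendsto_compose[OF gcont X1] .
    have sq0: "(\<lambda>j. norm (x (Suc (p j)) - x (p j))^2) \<longlonglongrightarrow> 0"
    proof (rule tendsto_sandwich[of "\<lambda>j. 0" _ _ "\<lambda>j. (C (p j) - C (Suc (p j))) * g (x (Suc (p j))) / c"])
      show "\<forall>\<^sub>F j in sequentially. 0 \<le> norm (x (Suc (p j)) - x (p j))^2" by simp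
      show "\<forall>\<^sub>F j in sequentially. norm (x (Suc (p j)) - x (p j))^2 \<le> (C (p j) - C (Suc (p j))) * g (x (Suc (p j))) / c"
        using stp cpos by (simp add: field_simps mult.commute)
      show "(\<lambda>j. 0::real) \<longlonglongrightarrow> 0" by simp
      have "(\<lambda>j. (C (p j) - C (Suc (p j))) * g (x (Suc (p j))) / c) \<longlonglongrightarrow> (Cs - Cs) * g xs / c"
        by (intro tendsto_intros C0 C1 gX1) (use cpos in simp)
      then show "(\<lambda>j. (C (p j) - C (Suc (p j))) * g (x (Suc (p j))) / c) \<longlonglongrightarrow> 0" by simp
    qed
    have "(\<lambda>j. sqrt (norm (x (Suc (p j)) - x (p j))^2)) \<longlonglongrightarrow> sqrt 0"
      by (intro tendsto_intros sq0)
    then have "(\<lambda>j. norm (x (Suc (p j)) - x (p j))) \<longlonglongrightarrow> 0" by simp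
    then have d0: "(\<lambda>j. x (Suc (p j)) - x (p j)) \<longlonglongrightarrow> 0" by (simp add: tendsto_norm_zero_iff)
    have X0: "(\<lambda>j. x (p j)) \<longlonglongrightarrow> xs"
    proof -
      have "(\<lambda>j. x (Suc (p j)) - (x (Suc (p j)) - x (p j))) \<longlonglongrightarrow> xs - 0"
        by (intro tendsto_intros X1 d0)
      then show ?thesis by simp
    qed
    have star: "fr (x (Suc k)) - C k * g (x (Suc k)) + (x (Suc k) - x k) \<bullet> gradh (x k)
        \<le> fr w - C k * g w + norm (w - x k)^2/(2*\<alpha>lo) + (w - x k) \<bullet> gradh (x k)"
      if w: "w \<in> edom f" for k w
    proof -
      note P = prox_ineq[OF iter'[of k] apos nm w]
      have "norm (w - x k)^2/(2*\<alpha> k) \<le> norm (w - x k)^2/(2*\<alpha>lo)"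
        using step(1,2) apos[of k] by (intro divide_left_mono) auto
      moreover have "0 \<le> norm (x (Suc k) - x k)^2/(2*\<alpha> k)" using apos[of k] by simp
      ultimately show ?thesis using P unfolding fr_def by linarith
    qed
    define R where "R j = C (p j) * g (x (Suc (p j))) - (x (Suc (p j)) - x (p j)) \<bullet> gradh (x (p j))
        + fr xs - C (p j) * g xs + norm (xs - x (p j))^2/(2*\<alpha>lo) + (xs - x (p j)) \<bullet> gradh (x (p j))" for j
    have GX0: "(\<lambda>j. gradh (x (p j))) \<longlonglongrightarrow> gradh xs" using isCont_tendsto_compose[OF Gcont X0] .
    have R: "R \<longlonglongrightarrow> fr xs"
    proof -
      have "R \<longlonglongrightarrow> Cs * g xs - 0 \<bullet> gradh xs + fr xs - Cs * g xs + norm (xs - xs)^2/(2*\<alpha>lo) + (xs - xs) \<bullet> gradh xs"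
        unfolding R_def by (intro tendsto_intros C0 gX1 d0 GX0 X0) (use step(1) in simp)
      then show ?thesis by simp
    qed
    have xsd: "xs \<in> edom f" using xsOm Om_def by blast
    have FR: "(\<lambda>j. fr (x (Suc (p j)))) \<longlonglongrightarrow> fr xs"
      unfolding order_tendsto_iff
    proof (intro conjI allI impI)
      fix a assume a: "a < fr xs"
      then have "ereal a < f xs" using Om_f[OF xsd] by simp
      from lsc_seq[OF f_lsc X1 this]
      show "\<forall>\<^sub>F j in sequentially. a < fr (x (Suc (p j)))"
        by eventually_elim (use allOm Om_def Om_f in auto)
    next
      fix a assume a: "fr xs < a"
      have "\<forall>\<^sub>F j in sequentially. R j < a" using order_tendstoD(2)[OF R a] .
      then show "\<forall>\<^sub>F j in sequentially. fr (x (Suc (p j))) < a"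
      proof eventually_elim
        case (elim j)
        have "fr (x (Suc (p j))) \<le> R j" using star[OF xsd, of "p j"] unfolding R_def by linarith
        then show ?case using elim by linarith
      qed
    qed
    have CsE: "Cs = (fr xs + h xs) / g xs"
    proof -
      have "(\<lambda>j. (fr (x (Suc (p j))) + h (x (Suc (p j)))) / g (x (Suc (p j)))) \<longlonglongrightarrow> (fr xs + h xs) / g xs"
        using gxs by (intro tendsto_intros FR gX1 isCont_tendsto_compose[OF hcont X1]) auto
      moreover have "(\<lambda>j. (fr (x (Suc (p j))) + h (x (Suc (p j)))) / g (x (Suc (p j)))) = (\<lambda>j. C (Suc (p j)))"
        using Om_F allOm unfolding C_def by simp
      ultimately show ?thesis using C1 LIMSEQ_unique by metis
    qed
    have FxsE: "F xs = ereal Cs" using Om_F[OF xsOm] CsE by simp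
    have lim: "fr xs - Cs * g xs \<le> fr w - Cs * g w + norm (w - xs)^2/(2*\<alpha>lo) + (w - xs) \<bullet> gradh xs"
      if w: "w \<in> edom f" for w
    proof (rule LIMSEQ_le)
      show "(\<lambda>j. fr (x (Suc (p j))) - C (p j) * g (x (Suc (p j))) + (x (Suc (p j)) - x (p j)) \<bullet> gradh (x (p j)))
          \<longlonglongrightarrow> fr xs - Cs * g xs"
      proof -
        have "(\<lambda>j. fr (x (Suc (p j))) - C (p j) * g (x (Suc (p j))) + (x (Suc (p j)) - x (p j)) \<bullet> gradh (x (p j)))
          \<longlonglongrightarrow> fr xs - Cs * g xs + 0 \<bullet> gradh xs"
          by (intro tendsto_intros FR C0 gX1 d0 GX0)
        then show ?thesis by simp
      qed
      show "(\<lambda>j. fr w - C (p j) * g w + norm (w - x (p j))^2/(2*\<alpha>lo) + (w - x (p j)) \<bullet> gradh (x (p j)))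
          \<longlonglongrightarrow> fr w - Cs * g w + norm (w - xs)^2/(2*\<alpha>lo) + (w - xs) \<bullet> gradh xs"
        by (intro tendsto_intros C0 X0 GX0) (use step(1) in simp)
      show "\<exists>N. \<forall>n\<ge>N. fr (x (Suc (p n))) - C (p n) * g (x (Suc (p n))) + (x (Suc (p n)) - x (p n)) \<bullet> gradh (x (p n))
          \<le> fr w - C (p n) * g w + norm (w - x (p n))^2/(2*\<alpha>lo) + (w - x (p n)) \<bullet> gradh (x (p n))"
        using star[OF w] by blast
    qed
    define M where "M = 1/(2*\<alpha>lo) + L/2"
    have Mpos: "M > 0" using step(1) L_pos unfolding M_def by (simp add: add_pos_pos)
    have key: "fr w + h w - Cs * g w \<ge> - M * norm (w - xs)^2" if w: "w \<in> edom f" for w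
    proof -
      have "Cs * g xs = fr xs + h xs" using CsE gxs by simp
      moreover note lim[OF w]
      moreover have "h w - h xs - gradh xs \<bullet> (w - xs) \<ge> - (L/2 * norm (w - xs)^2)" using desc[of w xs] by blast
      ultimately show ?thesis unfolding M_def by (simp add: inner_commute algebra_simps add_divide_distrib)
    qed
    have "0 \<le> Liminf (at xs) (\<lambda>z. (F z - F xs - ereal (0 \<bullet> (z - xs))) / ereal (norm (z - xs)))"
      unfolding le_Liminf_iff
    proof (intro allI impI)
      fix y :: ereal assume y: "y < 0"
      obtain t where t: "y < ereal t" "ereal t < 0" using ereal_dense2[OF y] by blast
      define e where "e = - t"
      have epos: "e > 0" using t(2) e_def by simp
      define \<delta> where "\<delta> = e * g xs / (2 * M)"
      have \<delta>pos: "\<delta> > 0" using epos gxs Mpos unfolding \<delta>_def by simp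
      have ev1: "eventually (\<lambda>z. dist (g z) (g xs) < g xs / 2) (at xs)"
        using tendstoD[OF gcont[unfolded isCont_def], of "g xs / 2"] gxs by simp
      have ev2: "eventually (\<lambda>z. z \<noteq> xs \<and> dist z xs < \<delta>) (at xs)"
        unfolding eventually_at using \<delta>pos by blast
      show "eventually (\<lambda>z. y < (F z - F xs - ereal (0 \<bullet> (z - xs))) / ereal (norm (z - xs))) (at xs)"
        using ev1 ev2
      proof eventually_elim
        case (elim z)
        define n where "n = norm (z - xs)"
        have npos: "n > 0" using elim unfolding n_def by simp
        have nd: "n < \<delta>" using elim unfolding n_def by (simp add: dist_norm)
        show ?case
        proof (cases "z \<in> Om")
          case False
          then have "F z = \<infinity>" unfolding F_def frac_obj_def Om_def by auto
          then show ?thesis using npos FxsE y unfolding n_def[symmetric] by auto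
        next
          case True
          have gz: "g z > g xs / 2" 
          proof -
            have "g xs - g z \<le> \<bar>g z - g xs\<bar>" by simp
            then show ?thesis using elim by (simp add: dist_real_def)
          qed
          define q where "q = fr z + h z - Cs * g z"
          have q: "q \<ge> - M * n^2" using key[of z] True unfolding q_def n_def Om_def by auto
          have "M * n^2 \<le> M * (\<delta> * n)"
            using nd npos Mpos by (simp add: power2_eq_square)
          also have "\<dots> = e * (g xs / 2) * n" unfolding \<delta>_def using Mpos by (simp add: field_simps)
          also have "\<dots> \<le> e * g z * n" using gz epos npos by simp
          finally have "q \<ge> - (e * g z * n)" using q by linarith
          then have "q / (g z * n) \<ge> - e"
            using gz gxs npos by (simp add: field_simps)
          moreover have "(fr z + h z) / g z - Cs = q / g z" unfolding q_def using gz gxs by (simp add: field_simps)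
          ultimately have "((fr z + h z) / g z - Cs) / n \<ge> t" unfolding e_def by simp
          then have "y < ereal (((fr z + h z) / g z - Cs) / n)" using t(1)
            by (meson ereal_less_eq(3) less_le_trans)
          then show ?thesis using Om_F[OF True] FxsE npos unfolding n_def[symmetric] by simp
        qed
      qed
    qed
    then show ?thesis unfolding frechet_subdiff_def using FxsE by simp
  qed
  show ?thesis using bnd accum unfolding F_def by blast
qed


end
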